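(* Let $F:\mathbb{R}^n\rightrightarrows\mathbb{R}^n$ be a set-valued map, consider the differential inclusion $\dot x\in F(x)$, $x\in\mathbb{R}^n$, and let $X_o,X_u\subset\mathbb{R}^n$. If there exists a lower semicontinuous time-varying barrier function candidate $B:\mathbb{R}_{\geq 0}\times\mathbb{R}^n\to\mathbb{R}$ for safety with respect to $(X_o,X_u)$ that satisfies property $(\star\star)$, then the system $\dot x\in F(x)$ is safe with respect to $(X_o,X_u)$.
   Context: A solution of $\dot x\in F(x)$ starting from $x_o$ is a locally absolutely continuous function $\phi:\operatorname{dom}\phi\to\mathbb{R}^n$, where $\operatorname{dom}\phi$ is $[0,T]$ or $[0,T)$ for some $T\in[0,\infty]$, with $\phi(0)=x_o$ and $\dot\phi(t)\in F(\phi(t))$ for almost all $t\in\operatorname{dom}\phi$. The system is safe with respect to $(X_o,X_u)$ if every solution $\phi$ starting from any $x_o\in X_o$ satisfies $\phi(t)\notin X_u$ for all $t\in\operatorname{dom}\phi$. A time-varying barrier function candidate for safety with respect to $(X_o,X_u)$ is a function $B:\mathbb{R}_{\geq0}\times\mathbb{R}^n\to\mathbb{R}$ with $B(t,x)>0$ for all $(t,x)\in\mathbb{R}_{\geq0}\times X_u$ and $B(t,x)\le 0$ for all $(t,x)\in\mathbb{R}_{\geq0}\times X_o$. Let $K:=\{(t,x)\in\mathbb{R}_{\geq0}\times\mathbb{R}^n: B(t,x)\le 0\}$, with interior $\operatorname{int}(K)$ taken in $\mathbb{R}_{\geq0}\times\mathbb{R}^n$. Property $(\star\star)$: there is an open neighborhood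 $U(K)$ of $K$ such that, along each solution of $\dot x\in F(x)$ considered in the extended time–state space (i.e., along each solution of $(\dot t,\dot x)\in\{1\}\times F(x)$) starting from a point of $U(K)\setminus\operatorname{int}(K)$ and remaining in $U(K)\setminus\operatorname{int}(K)$ on a time interval, the map $t\mapsto B(t,\phi(t))$ is nonincreasing on that interval. *)

theory Defs
  imports "HOL-Analysis.Analysis"
begin

definition abs_cont_on :: "real \<Rightarrow> real \<Rightarrow> (real \<Rightarrow> 'a::real_normed_vector) \<Rightarrow> bool" where
  "abs_cont_on a b \<phi> \<longleftrightarrow>
     (\<forall>\<epsilon>>0. \<exists>\<delta>>0. \<forall>(n::nat) (l::nat \<Rightarrow> real) (r::nat \<Rightarrow> real).
        (\<forall>i<n. l i \<le> r i \<and> a \<le> l i \<and> r i \<le> b) \<and>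
        (\<forall>i<n. \<forall>j<n. i \<noteq> j \<longrightarrow> r i \<le> l j \<or> r j \<le> l i) \<and>
        (\<Sum>i<n. r i - l i) < \<delta>
        \<longrightarrow> (\<Sum>i<n. norm (\<phi> (r i) - \<phi> (l i))) < \<epsilon>)"

definition loc_abs_cont_on :: "real set \<Rightarrow> (real \<Rightarrow> 'a::real_normed_vector) \<Rightarrow> bool" where
  "loc_abs_cont_on D \<phi> \<longleftrightarrow> (\<forall>a b. a \<le> b \<and> {a..b} \<subseteq> D \<longrightarrow> abs_cont_on a b \<phi>)"

definition sol_domain :: "real set \<Rightarrow> bool" where
  "sol_domain D \<longleftrightarrow> (\<exists>T\<ge>0. D = {0..T}) \<or> (\<exists>T>0. D = {0..<T}) \<or> D = {0..}"

definition is_solution :: "('a::euclidean_space \<Rightarrow> 'a set) \<Rightarrow> 'a \<Rightarrow> (real \<Rightarrow> 'a) \<Rightarrow> real set \<Rightarrow> bool" where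
  "is_solution F x0 \<phi> D \<longleftrightarrow>
     sol_domain D \<and> \<phi> 0 = x0 \<and> loc_abs_cont_on D \<phi> \<and>
     (\<exists>N. N \<in> null_sets lebesgue \<and>
        (\<forall>t\<in>D - N. \<exists>v \<in> F (\<phi> t). (\<phi> has_vector_derivative v) (at t within D)))"

definition safe :: "('a::euclidean_space \<Rightarrow> 'a set) \<Rightarrow> 'a set \<Rightarrow> 'a set \<Rightarrow> bool" where
  "safe F Xo Xu \<longleftrightarrow>
     (\<forall>x0\<in>Xo. \<forall>\<phi> D. is_solution F x0 \<phi> D \<longrightarrow> (\<forall>t\<in>D. \<phi> t \<notin> Xu))"

definition ext_space :: "(real \<times> 'a) set" where
  "ext_space = {0..} \<times> UNIV"

definition barrier_candidate :: "(real \<Rightarrow> 'a \<Rightarrow> real) \<Rightarrow> 'a set \<Rightarrow> 'a set \<Rightarrow> bool" where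
  "barrier_candidate B Xo Xu \<longleftrightarrow>
     (\<forall>t\<ge>0. \<forall>x\<in>Xu. B t x > 0) \<and> (\<forall>t\<ge>0. \<forall>x\<in>Xo. B t x \<le> 0)"

definition lsc_on :: "('b::topological_space) set \<Rightarrow> ('b \<Rightarrow> real) \<Rightarrow> bool" where
  "lsc_on S f \<longleftrightarrow> (\<forall>p\<in>S. \<forall>\<epsilon>>0. \<forall>\<^sub>F q in at p within S. f q > f p - \<epsilon>)"

definition sublevel_K :: "(real \<Rightarrow> 'a \<Rightarrow> real) \<Rightarrow> (real \<times> 'a) set" where
  "sublevel_K B = {(t, x). t \<ge> 0 \<and> B t x \<le> 0}"

text \<open>A solution of the extended system (t',x') in {1} x F(x) from (t0,x0) is s |-> (t0+s, phi s)
  with phi a solution of x' in F(x) from x0.\<close>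
definition star_star :: "('a::euclidean_space \<Rightarrow> 'a set) \<Rightarrow> (real \<Rightarrow> 'a \<Rightarrow> real) \<Rightarrow> bool" where
  "star_star F B \<longleftrightarrow>
     (\<exists>U. openin (top_of_set ext_space) U \<and> sublevel_K B \<subseteq> U \<and>
       (let W = U - (top_of_set ext_space) interior_of (sublevel_K B) in
        \<forall>t0\<ge>0. \<forall>x0 \<phi> D. is_solution F x0 \<phi> D \<and> (t0, x0) \<in> W \<longrightarrow>
          (\<forall>I. is_interval I \<and> I \<subseteq> D \<and> (\<forall>s\<in>I. (t0 + s, \<phi> s) \<in> W) \<longrightarrow>
             (\<forall>s1\<in>I. \<forall>s2\<in>I. s1 \<le> s2 \<longrightarrow> B (t0 + s2) (\<phi> s2) \<le> B (t0 + s1) (\<phi> s1)))))"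

end

theory Submission imports Defs begin

lemma abs_cont_cont:
  assumes "abs_cont_on a b \<phi>"
  shows "continuous_on {a..b} \<phi>"
  unfolding continuous_on_iff
proof (intro ballI allI impI)
  fix x e assume x: "x \<in> {a..b}" and e: "(0::real) < e"
  obtain d where d: "d > 0" and H0: "\<forall>(n::nat) (l::nat \<Rightarrow> real) (r::nat \<Rightarrow> real). (\<forall>i<n. l i \<le> r i \<and> a \<le> l i \<and> r i \<le> b) \<and>
        (\<forall>i<n. \<forall>j<n. i \<noteq> j \<longrightarrow> r i \<le> l j \<or> r j \<le> l i) \<and>
        (\<Sum>i<n. r i - l i) < d
        \<longrightarrow> (\<Sum>i<n. norm (\<phi> (r i) - \<phi> (l i))) < e"
    apply (insert assms[unfolded abs_cont_on_def, rule_format, OF e])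
    apply (erule exE, erule conjE)
    apply (erule that, assumption) done
  note H = H0[rule_format]
  show "\<exists>d>0. \<forall>x'\<in>{a..b}. dist x' x < d \<longrightarrow> dist (\<phi> x') (\<phi> x) < e"
  proof (intro exI[of _ d] conjI ballI impI d)
    fix y assume y: "y \<in> {a..b}" and dy: "dist y x < d"
    have "(\<Sum>i<Suc 0. norm (\<phi> ((\<lambda>_. max x y) i) - \<phi> ((\<lambda>_. min x y) i))) < e"
      apply (rule H) using x y dy by (auto simp: dist_real_def)
    then show "dist (\<phi> y) (\<phi> x) < e"
      by (cases "x \<le> y") (auto simp: dist_norm norm_minus_commute max_def min_def)
  qed
qed

lemma abs_cont_shift:
  assumes "abs_cont_on (c + a) (c + b) \<phi>"
  shows "abs_cont_on a b (\<lambda>s. \<phi> (c + s))"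
  unfolding abs_cont_on_def
proof (intro allI impI)
  fix e :: real assume e: "e > 0"
  obtain d where d: "d > 0" and H0: "\<forall>(n::nat) (l::nat \<Rightarrow> real) (r::nat \<Rightarrow> real). (\<forall>i<n. l i \<le> r i \<and> c + a \<le> l i \<and> r i \<le> c + b) \<and>
        (\<forall>i<n. \<forall>j<n. i \<noteq> j \<longrightarrow> r i \<le> l j \<or> r j \<le> l i) \<and>
        (\<Sum>i<n. r i - l i) < d
        \<longrightarrow> (\<Sum>i<n. norm (\<phi> (r i) - \<phi> (l i))) < e"
    apply (insert assms[unfolded abs_cont_on_def, rule_format, OF e])
    apply (erule exE, erule conjE)
    apply (erule that, assumption) done
  note H = H0[rule_format]
  show "\<exists>d>0. \<forall>(n::nat) (l::nat \<Rightarrow> real) (r::nat \<Rightarrow> real). (\<forall>i<n. l i \<le> r i \<and> a \<le> l i \<and> r i \<le> b) \<and>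
        (\<forall>i<n. \<forall>j<n. i \<noteq> j \<longrightarrow> r i \<le> l j \<or> r j \<le> l i) \<and>
        (\<Sum>i<n. r i - l i) < d
        \<longrightarrow> (\<Sum>i<n. norm (\<phi> (c + r i) - \<phi> (c + l i))) < e"
  proof (intro exI[of _ d] conjI allI impI d)
    fix n :: nat and l r :: "nat \<Rightarrow> real"
    assume A: "(\<forall>i<n. l i \<le> r i \<and> a \<le> l i \<and> r i \<le> b) \<and>
        (\<forall>i<n. \<forall>j<n. i \<noteq> j \<longrightarrow> r i \<le> l j \<or> r j \<le> l i) \<and>
        (\<Sum>i<n. r i - l i) < d"
    have "(\<Sum>i<n. (c + r i) - (c + l i)) = (\<Sum>i<n. r i - l i)" by simp
    then show "(\<Sum>i<n. norm (\<phi> (c + r i) - \<phi> (c + l i))) < e"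
      using H[of n "\<lambda>i. c + l i" "\<lambda>i. c + r i"] A by auto
  qed
qed

lemma sol_domain_props:
  assumes "sol_domain D" "t \<in> D"
  shows "{0..t} \<subseteq> D" "D \<subseteq> {0..}"
  using assms unfolding sol_domain_def by auto

lemma shift_sol:
  assumes sol: "is_solution F x0 \<phi> D" and tge: "0 \<le> \<tau>" and d: "\<delta> > 0" and subD: "{\<tau>..\<tau> + \<delta>} \<subseteq> D"
  shows "is_solution F (\<phi> \<tau>) (\<lambda>s. \<phi> (\<tau> + s)) {0..\<delta>}"
proof -
  from sol obtain N where lac: "loc_abs_cont_on D \<phi>"
    and N: "N \<in> null_sets lebesgue"
    and der: "\<forall>t\<in>D - N. \<exists>v\<in>F (\<phi> t). (\<phi> has_vector_derivative v) (at t within D)"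
    unfolding is_solution_def by blast
  show ?thesis
    unfolding is_solution_def
  proof (intro conjI)
    show "sol_domain {0..\<delta>}" unfolding sol_domain_def using d by auto
    show "\<phi> (\<tau> + 0) = \<phi> \<tau>" by simp
    show "loc_abs_cont_on {0..\<delta>} (\<lambda>s. \<phi> (\<tau> + s))"
      unfolding loc_abs_cont_on_def
    proof (intro allI impI)
      fix a b assume ab: "a \<le> b \<and> {a..b} \<subseteq> {0..\<delta>}"
      then have "{\<tau> + a..\<tau> + b} \<subseteq> {\<tau>..\<tau> + \<delta>}" by auto
      then have "{\<tau> + a..\<tau> + b} \<subseteq> D" using subD by blast
      moreover have "\<tau> + a \<le> \<tau> + b" using ab by simp
      ultimately have "abs_cont_on (\<tau> + a) (\<tau> + b) \<phi>" using lac unfolding loc_abs_cont_on_def by blast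
      then show "abs_cont_on a b (\<lambda>s. \<phi> (\<tau> + s))" by (rule abs_cont_shift)
    qed
    show "\<exists>N. N \<in> null_sets lebesgue \<and> (\<forall>t\<in>{0..\<delta>} - N. \<exists>v\<in>F (\<phi> (\<tau> + t)).
             ((\<lambda>s. \<phi> (\<tau> + s)) has_vector_derivative v) (at t within {0..\<delta>}))"
    proof (intro exI[of _ "(+) (-\<tau>) ` N"] conjI ballI)
      have "negligible N" using N by (simp add: negligible_iff_null_sets)
      then have "negligible ((+) (-\<tau>) ` N)" by (rule negligible_translation)
      then show "(+) (-\<tau>) ` N \<in> null_sets lebesgue" by (simp add: negligible_iff_null_sets)
    next
      fix t assume t: "t \<in> {0..\<delta>} - (+) (-\<tau>) ` N"
      have "\<tau> + t \<notin> N"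
      proof
        assume "\<tau> + t \<in> N"
        then have "(-\<tau>) + (\<tau> + t) \<in> (+) (-\<tau>) ` N" by (rule imageI)
        then show False using t by simp
      qed
      moreover have "\<tau> + t \<in> D" using t subD by auto
      ultimately obtain v where v: "v \<in> F (\<phi> (\<tau> + t))" and dv: "(\<phi> has_vector_derivative v) (at (\<tau> + t) within D)"
        using der by blast
      have img: "(+) \<tau> ` {0..\<delta>} \<subseteq> D" using subD by auto
      have dv2: "(\<phi> has_vector_derivative v) (at ((+) \<tau> t) within (+) \<tau> ` {0..\<delta>})"
        using has_vector_derivative_within_subset[OF dv img] by simp
      have df0: "((\<lambda>x. \<tau> + x) has_vector_derivative 0 + 1) (at t within {0..\<delta>})"
        by (intro has_vector_derivative_add has_vector_derivative_const has_vector_derivative_id)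
      have df: "((+) \<tau> has_vector_derivative 1) (at t within {0..\<delta>})"
        using df0 by simp
      have "((\<phi> \<circ> (+) \<tau>) has_vector_derivative (1 *\<^sub>R v)) (at t within {0..\<delta>})"
        by (rule vector_diff_chain_within[OF df dv2])
      then have "((\<lambda>s. \<phi> (\<tau> + s)) has_vector_derivative v) (at t within {0..\<delta>})"
        by (simp add: o_def)
      then show "\<exists>v\<in>F (\<phi> (\<tau> + t)). ((\<lambda>s. \<phi> (\<tau> + s)) has_vector_derivative v) (at t within {0..\<delta>})"
        using v by blast
    qed
  qed
qed

theorem theorem1:
  fixes F :: "'a::euclidean_space \<Rightarrow> 'a set"
    and Xo Xu :: "'a set"
  assumes "\<exists>B. lsc_on ext_space (\<lambda>(t, x). B t x) \<and> barrier_candidate B Xo Xu \<and> star_star F B"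
  shows "safe F Xo Xu"
proof -
  obtain B where lsc: "lsc_on ext_space (\<lambda>(t, x). B t x)" and bc: "barrier_candidate B Xo Xu"
    and ss: "star_star F B" using assms by blast
  define IK where "IK = top_of_set ext_space interior_of sublevel_K B"
  obtain U where Uo: "openin (top_of_set ext_space) U" and KU: "sublevel_K B \<subseteq> U"
    and P: "\<forall>t0\<ge>0. \<forall>x0 \<phi> D. is_solution F x0 \<phi> D \<and> (t0, x0) \<in> U - IK \<longrightarrow>
          (\<forall>I. is_interval I \<and> I \<subseteq> D \<and> (\<forall>s\<in>I. (t0 + s, \<phi> s) \<in> U - IK) \<longrightarrow>
             (\<forall>s1\<in>I. \<forall>s2\<in>I. s1 \<le> s2 \<longrightarrow> B (t0 + s2) (\<phi> s2) \<le> B (t0 + s1) (\<phi> s1)))"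
    using ss unfolding star_star_def Let_def IK_def by blast
  show ?thesis unfolding safe_def
  proof (intro ballI allI impI)
    fix x0 \<phi> D t1 assume x0: "x0 \<in> Xo" and sol: "is_solution F x0 \<phi> D" and t1D: "t1 \<in> D"
    show "\<phi> t1 \<notin> Xu"
    proof
      assume u: "\<phi> t1 \<in> Xu"
      from sol obtain N where sd: "sol_domain D" and phi0: "\<phi> 0 = x0" and lac: "loc_abs_cont_on D \<phi>"
        and N: "N \<in> null_sets lebesgue"
        and der: "\<forall>t\<in>D - N. \<exists>v\<in>F (\<phi> t). (\<phi> has_vector_derivative v) (at t within D)"
        unfolding is_solution_def by blast
      have sub: "{0..t1} \<subseteq> D" and Dpos: "D \<subseteq> {0..}" using sol_domain_props[OF sd t1D] by auto
      have t1pos: "0 \<le> t1" using Dpos t1D by auto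
      have contphi: "continuous_on {0..t1} \<phi>"
        using lac sub t1pos unfolding loc_abs_cont_on_def by (auto intro: abs_cont_cont)
      define \<gamma> where "\<gamma> = (\<lambda>s. (s, \<phi> s))"
      have contg: "continuous_on {0..t1} \<gamma>" unfolding \<gamma>_def by (intro continuous_intros contphi)
      have B1: "B t1 (\<phi> t1) > 0" using bc u t1pos unfolding barrier_candidate_def by auto
      have B0: "B 0 (\<phi> 0) \<le> 0" using bc x0 phi0 unfolding barrier_candidate_def by auto
      define S where "S = {s \<in> {0..t1}. B s (\<phi> s) \<le> 0}"
      define \<tau> where "\<tau> = Sup S"
      have S0: "0 \<in> S" using B0 t1pos S_def by auto
      have bdd: "bdd_above S" unfolding S_def by (auto intro: bdd_aboveI[of _ t1])
      have tge: "0 \<le> \<tau>" using cSup_upper[OF S0 bdd] \<tau>_def by simp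
      have tle: "\<tau> \<le> t1" unfolding \<tau>_def using S0 by (intro cSup_least) (auto simp: S_def)
      have tin: "\<tau> \<in> {0..t1}" using tge tle by auto
      have after: "B s (\<phi> s) > 0" if "\<tau> < s" "s \<le> t1" for s
      proof (rule ccontr)
        assume "\<not> ?thesis" then have "s \<in> S" using that tge S_def by auto
        then have "s \<le> \<tau>" using cSup_upper[OF _ bdd] \<tau>_def by auto
        with that show False by simp
      qed
      have tS: "B \<tau> (\<phi> \<tau>) \<le> 0"
      proof (rule ccontr)
        assume "\<not> ?thesis" then have pos: "B \<tau> (\<phi> \<tau>) > 0" by simp
        have pext: "(\<tau>, \<phi> \<tau>) \<in> ext_space" unfolding ext_space_def using tge by auto
        from lsc pext pos have "\<forall>\<^sub>F q in at (\<tau>, \<phi> \<tau>) within ext_space. (\<lambda>(t, x). B t x) q > B \<tau> (\<phi> \<tau>) - B \<tau> (\<phi> \<tau>) / 2"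
          unfolding lsc_on_def by (metis case_prod_conv half_gt_zero)
        then obtain d where d: "d > 0" and dH: "\<forall>q\<in>ext_space. q \<noteq> (\<tau>, \<phi> \<tau>) \<and> dist q (\<tau>, \<phi> \<tau>) < d \<longrightarrow> (\<lambda>(t, x). B t x) q > B \<tau> (\<phi> \<tau>) - B \<tau> (\<phi> \<tau>) / 2"
          unfolding eventually_at by blast
        obtain e where e: "e > 0" and eH: "\<forall>s\<in>{0..t1}. dist s \<tau> < e \<longrightarrow> dist (\<gamma> s) (\<gamma> \<tau>) < d"
          using contg tin d unfolding continuous_on_iff by blast
        obtain s where sS: "s \<in> S" and se: "\<tau> - e < s" using less_cSupE[of "\<tau> - e" S] e S0 \<tau>_def by auto
        have "s \<le> \<tau>" using cSup_upper[OF sS bdd] \<tau>_def by simp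
        moreover have sin: "s \<in> {0..t1}" using sS S_def by auto
        moreover have Bs: "B s (\<phi> s) \<le> 0" using sS S_def by auto
        ultimately have ds: "dist s \<tau> < e" using se by (simp add: dist_real_def)
        show False
        proof (cases "s = \<tau>")
          case True then show False using Bs pos by simp
        next
          case False
          have "(s, \<phi> s) \<in> ext_space" using sin unfolding ext_space_def by auto
          moreover have "dist (s, \<phi> s) (\<tau>, \<phi> \<tau>) < d" using eH sin ds unfolding \<gamma>_def by auto
          ultimately have "B s (\<phi> s) > B \<tau> (\<phi> \<tau>) - B \<tau> (\<phi> \<tau>) / 2" using dH False by auto
          then show False using Bs pos by simp
        qed
      qed
      have tlt: "\<tau> < t1" using tle tS B1 by (cases "\<tau> = t1") auto
      have pK: "(\<tau>, \<phi> \<tau>) \<in> sublevel_K B" using tge tS unfolding sublevel_K_def by auto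
      have nearby: "\<exists>\<delta>>0. \<forall>s\<in>{0..\<delta>}. (\<tau> + s, \<phi> (\<tau> + s)) \<in> Ov \<and> \<tau> + s \<le> t1"
        if Ovo: "open Ov" and Ovp: "(\<tau>, \<phi> \<tau>) \<in> Ov" for Ov
      proof -
        obtain d where d: "d > 0" and dO: "ball (\<tau>, \<phi> \<tau>) d \<subseteq> Ov"
          using openE[OF Ovo Ovp] by blast
        obtain e where e: "e > 0" and eH: "\<forall>s\<in>{0..t1}. dist s \<tau> < e \<longrightarrow> dist (\<gamma> s) (\<gamma> \<tau>) < d"
          using contg tin d unfolding continuous_on_iff by blast
        define \<delta> where "\<delta> = min (e/2) (t1 - \<tau>)"
        have dpos: "\<delta> > 0" unfolding \<delta>_def using e tlt by simp
        have "\<forall>s\<in>{0..\<delta>}. (\<tau> + s, \<phi> (\<tau> + s)) \<in> Ov \<and> \<tau> + s \<le> t1"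
        proof
          fix s assume s: "s \<in> {0..\<delta>}"
          then have s0: "0 \<le> s" and s1: "s \<le> e/2" and s2: "s \<le> t1 - \<tau>" unfolding \<delta>_def by auto
          have i1: "\<tau> + s \<in> {0..t1}" using s0 s2 tge by simp
          have i2: "dist (\<tau> + s) \<tau> < e" using s0 s1 e by (simp add: dist_real_def)
          have "dist (\<gamma> (\<tau> + s)) (\<gamma> \<tau>) < d" using eH i1 i2 by blast
          then have "\<gamma> (\<tau> + s) \<in> ball (\<gamma> \<tau>) d" by (simp add: dist_commute)
          then have "(\<tau> + s, \<phi> (\<tau> + s)) \<in> ball (\<tau>, \<phi> \<tau>) d" unfolding \<gamma>_def .
          then have "(\<tau> + s, \<phi> (\<tau> + s)) \<in> Ov" using dO by blast
          moreover have "\<tau> + s \<le> t1" using s2 by simp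
          ultimately show "(\<tau> + s, \<phi> (\<tau> + s)) \<in> Ov \<and> \<tau> + s \<le> t1" by blast
        qed
        then show ?thesis using dpos by blast
      qed
      have notint: "(\<tau>, \<phi> \<tau>) \<notin> IK"
      proof
        assume "(\<tau>, \<phi> \<tau>) \<in> IK"
        then obtain T where T1: "openin (top_of_set ext_space) T" and T2: "(\<tau>, \<phi> \<tau>) \<in> T"
          and T3: "T \<subseteq> sublevel_K B"
          unfolding IK_def interior_of_def by blast
        from T1 obtain Ov where Ov1: "open Ov" and Ov2: "T = ext_space \<inter> Ov" by (auto simp: openin_open)
        have "(\<tau>, \<phi> \<tau>) \<in> Ov" using T2 Ov2 by blast
        from nearby[OF Ov1 this] obtain \<delta> where \<delta>: "\<delta> > 0"
          and H: "\<forall>s\<in>{0..\<delta>}. (\<tau> + s, \<phi> (\<tau> + s)) \<in> Ov \<and> \<tau> + s \<le> t1"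
          by blast
        have "\<delta> \<in> {0..\<delta>}" using \<delta> by simp
        then have h1: "(\<tau> + \<delta>, \<phi> (\<tau> + \<delta>)) \<in> Ov" and h2: "\<tau> + \<delta> \<le> t1" using H by blast+
        have "(\<tau> + \<delta>, \<phi> (\<tau> + \<delta>)) \<in> ext_space" unfolding ext_space_def using tge \<delta> by simp
        then have "(\<tau> + \<delta>, \<phi> (\<tau> + \<delta>)) \<in> T" using h1 Ov2 by blast
        then have "(\<tau> + \<delta>, \<phi> (\<tau> + \<delta>)) \<in> sublevel_K B" using T3 by blast
        then have "B (\<tau> + \<delta>) (\<phi> (\<tau> + \<delta>)) \<le> 0" unfolding sublevel_K_def by simp
        moreover have "\<tau> < \<tau> + \<delta>" using \<delta> by simp
        then have "B (\<tau> + \<delta>) (\<phi> (\<tau> + \<delta>)) > 0" using after h2 by blast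
        ultimately show False by simp
      qed
      obtain Ov where Ov1: "open Ov" and Ov2: "U = ext_space \<inter> Ov" using Uo by (auto simp: openin_open)
      have "(\<tau>, \<phi> \<tau>) \<in> U" using pK KU by blast
      then have "(\<tau>, \<phi> \<tau>) \<in> Ov" using Ov2 by blast
      from nearby[OF Ov1 this] obtain \<delta> where \<delta>: "\<delta> > 0"
        and H: "\<forall>s\<in>{0..\<delta>}. (\<tau> + s, \<phi> (\<tau> + s)) \<in> Ov \<and> \<tau> + s \<le> t1"
        by blast
      have inW: "(\<tau> + s, \<phi> (\<tau> + s)) \<in> U - IK" if s: "s \<in> {0..\<delta>}" for s
      proof -
        have h1: "(\<tau> + s, \<phi> (\<tau> + s)) \<in> Ov" and h2: "\<tau> + s \<le> t1" using H s by blast+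
        have "(\<tau> + s, \<phi> (\<tau> + s)) \<in> ext_space" unfolding ext_space_def using tge s by simp
        then have "(\<tau> + s, \<phi> (\<tau> + s)) \<in> U" using h1 Ov2 by blast
        moreover have "(\<tau> + s, \<phi> (\<tau> + s)) \<notin> IK"
        proof (cases "s = 0")
          case True then show ?thesis using notint by simp
        next
          case False
          then have "\<tau> < \<tau> + s" using s by simp
          then have "B (\<tau> + s) (\<phi> (\<tau> + s)) > 0" using after h2 by blast
          then have "(\<tau> + s, \<phi> (\<tau> + s)) \<notin> sublevel_K B" unfolding sublevel_K_def by simp
          moreover have "IK \<subseteq> sublevel_K B" unfolding IK_def by (rule interior_of_subset)
          ultimately show ?thesis by blast
        qed
        ultimately show ?thesis by blast
      qed
      have "\<delta> \<in> {0..\<delta>}" using \<delta> by simp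
      then have "\<tau> + \<delta> \<le> t1" using H by blast
      then have subD: "{\<tau>..\<tau> + \<delta>} \<subseteq> D" using sub tge by auto
      have solpsi: "is_solution F (\<phi> \<tau>) (\<lambda>s. \<phi> (\<tau> + s)) {0..\<delta>}"
        by (rule shift_sol[OF sol tge \<delta> subD])
      have W0: "(\<tau>, \<phi> \<tau>) \<in> U - IK" using inW[of 0] \<delta> by simp
      have W: "\<forall>s\<in>{0..\<delta>}. (\<tau> + s, \<phi> (\<tau> + s)) \<in> U - IK" using inW by blast
      have I1: "is_interval {0..\<delta>}" by (simp add: is_interval_cc)
      have P1: "\<forall>I. is_interval I \<and> I \<subseteq> {0..\<delta>} \<and> (\<forall>s\<in>I. (\<tau> + s, \<phi> (\<tau> + s)) \<in> U - IK) \<longrightarrow>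
             (\<forall>s1\<in>I. \<forall>s2\<in>I. s1 \<le> s2 \<longrightarrow> B (\<tau> + s2) (\<phi> (\<tau> + s2)) \<le> B (\<tau> + s1) (\<phi> (\<tau> + s1)))"
        using P[rule_format, OF tge, of "\<phi> \<tau>" "\<lambda>s. \<phi> (\<tau> + s)" "{0..\<delta>}"] solpsi W0 by blast
      then have "\<forall>s1\<in>{0..\<delta>}. \<forall>s2\<in>{0..\<delta>}. s1 \<le> s2 \<longrightarrow> B (\<tau> + s2) (\<phi> (\<tau> + s2)) \<le> B (\<tau> + s1) (\<phi> (\<tau> + s1))"
        using I1 W by blast
      moreover have "(0::real) \<in> {0..\<delta>}" "\<delta> \<in> {0..\<delta>}" "(0::real) \<le> \<delta>" using \<delta> by auto
      ultimately have "B (\<tau> + \<delta>) (\<phi> (\<tau> + \<delta>)) \<le> B (\<tau> + 0) (\<phi> (\<tau> + 0))" by blast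
      moreover have "B (\<tau> + \<delta>) (\<phi> (\<tau> + \<delta>)) > 0" using after \<delta> \<open>\<tau> + \<delta> \<le> t1\<close> by simp
      ultimately show False using tS by simp
    qed
  qed
qed

end
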